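(* Let $H$ be a real Hilbert space, $c_0$ the Banach space of real sequences converging to $0$ (sup norm), with dual identified with $\ell^1$, let $A:H\to c_0$ be bounded linear with adjoint $A^*:\ell^1\to H$, let $H_n\subset H$ be a subspace of dimension $n$, and let $f^\delta\in H$. Assume $\mathcal N(A)\cap H_n=\{0\}$. Then the set $$\operatorname{argmin}\Big\{\|u\|_1 \;:\; u\in\ell^1,\ \langle z,A^*u\rangle=\langle z,f^\delta\rangle \text{ for all } z\in H_n\Big\}$$ is nonempty.
   Context: $A^*:\ell^1\to H$ is defined by $\langle A^*u,z\rangle=\sum_i u_i (Az)_i$ for $u\in\ell^1$, $z\in H$; it is weak*-to-weak continuous. $\mathcal N(A)$ denotes the null space of $A$. The constraint is equivalent to $P_nA^*u=P_nf^\delta$, where $P_n$ is the orthogonal projection onto $H_n$. *)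

theory Defs
  imports "HOL-Analysis.Analysis"
begin

definition in_l1 :: "(nat \<Rightarrow> real) \<Rightarrow> bool" where
  "in_l1 u \<longleftrightarrow> summable (\<lambda>i. \<bar>u i\<bar>)"

definition l1_norm :: "(nat \<Rightarrow> real) \<Rightarrow> real" where
  "l1_norm u = (\<Sum>i. \<bar>u i\<bar>)"

definition bounded_linear_c0 :: "('a::real_normed_vector \<Rightarrow> (nat \<Rightarrow> real)) \<Rightarrow> bool" where
  "bounded_linear_c0 A \<longleftrightarrow> (\<forall>x y i. A (x + y) i = A x i + A y i)
     \<and> (\<forall>c x i. A (c *\<^sub>R x) i = c * A x i) \<and> (\<forall>z. A z \<longlonglongrightarrow> 0)
     \<and> (\<exists>K. \<forall>z i. \<bar>A z i\<bar> \<le> K * norm z)"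

text \<open>The pairing of the adjoint: <z, A^* u> = sum_i u_i (A z)_i.\<close>
definition adj_pair :: "('a \<Rightarrow> (nat \<Rightarrow> real)) \<Rightarrow> (nat \<Rightarrow> real) \<Rightarrow> 'a \<Rightarrow> real" where
  "adj_pair A u z = (\<Sum>i. u i * A z i)"

definition feasible :: "('a::real_inner \<Rightarrow> (nat \<Rightarrow> real)) \<Rightarrow> 'a set \<Rightarrow> 'a \<Rightarrow> (nat \<Rightarrow> real) set" where
  "feasible A Hn f = {u. in_l1 u \<and> (\<forall>z\<in>Hn. adj_pair A u z = z \<bullet> f)}"

definition argmin_l1 :: "('a::real_inner \<Rightarrow> (nat \<Rightarrow> real)) \<Rightarrow> 'a set \<Rightarrow> 'a \<Rightarrow> (nat \<Rightarrow> real) set" where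
  "argmin_l1 A Hn f = {u \<in> feasible A Hn f. \<forall>v \<in> feasible A Hn f. l1_norm u \<le> l1_norm v}"

end

theory Submission
  imports Defs "HOL-Library.Diagonal_Subsequence"
begin


lemma GS_step:
  fixes S :: "'a::real_inner set"
  assumes fin: "finite S" and S: "pairwise orthogonal S" and x: "x \<in> span S"
    shows "orthogonal x (a - (\<Sum>b\<in>S. (b \<bullet> a / (b \<bullet> b)) *\<^sub>R b))"
proof -
  have "orthogonal (a - (\<Sum>b\<in>S. (b \<bullet> a / (b \<bullet> b)) *\<^sub>R b)) x"
       if "x \<in> S" for x
  proof -
    have "a \<bullet> x = (\<Sum>y\<in>S. if y = x then y \<bullet> a else 0)"
      by (simp add: fin inner_commute that)
    also have "\<dots> =  (\<Sum>b\<in>S. b \<bullet> a * (b \<bullet> x) / (b \<bullet> b))"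
      apply (rule sum.cong [OF refl], simp)
      by (meson S orthogonal_def pairwise_def that)
   finally show ?thesis
     by (simp add: orthogonal_def algebra_simps inner_sum_left)
  qed
  then show ?thesis
    using orthogonal_to_span orthogonal_commute x by blast
qed

lemma GS_expand:
  fixes S :: "'a::real_inner set"
  assumes fin: "finite S" and S: "pairwise orthogonal S" and z: "z \<in> span S"
  shows "z = (\<Sum>b\<in>S. (b \<bullet> z / (b \<bullet> b)) *\<^sub>R b)"
proof -
  let ?p = "(\<Sum>b\<in>S. (b \<bullet> z / (b \<bullet> b)) *\<^sub>R b)"
  have "?p \<in> span S" by (simp add: span_base span_mul span_sum)
  then have "z - ?p \<in> span S" using z span_diff by blast
  then have "orthogonal (z - ?p) (z - ?p)" by (rule GS_step[OF fin S])
  then show ?thesis by (simp add: orthogonal_self)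
qed

lemma proj_exists:
  fixes S :: "'a::real_inner set"
  assumes fin: "finite S"
  obtains p where "p \<in> span S" "\<And>y. y \<in> span S \<Longrightarrow> orthogonal (x - p) y"
proof -
  obtain C where C: "finite C" "span C = span S" "pairwise orthogonal C"
    using basis_orthogonal[OF fin] by blast
  let ?p = "(\<Sum>b\<in>C. (b \<bullet> x / (b \<bullet> b)) *\<^sub>R b)"
  have "?p \<in> span C" by (simp add: span_base span_mul span_sum)
  then have "?p \<in> span S" using C(2) by simp
  moreover have "orthogonal (x - ?p) y" if "y \<in> span S" for y
  proof -
    have "y \<in> span C" using that C(2) by simp
    from GS_step[OF C(1) C(3) this, of x] show ?thesis by (simp add: orthogonal_commute)
  qed
  ultimately show ?thesis using that by blast
qed

lemma bl_zero: assumes "bounded_linear_c0 A" shows "A 0 i = 0"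
proof -
  have "A (0 + 0) i = A 0 i + A 0 i" using assms unfolding bounded_linear_c0_def by blast
  then show ?thesis by simp
qed

lemma bl_sum: assumes "bounded_linear_c0 A" "finite S"
  shows "A (\<Sum>c\<in>S. g c) i = (\<Sum>c\<in>S. A (g c) i)"
  using assms(2)
proof (induction S rule: finite_induct)
  case empty then show ?case using bl_zero[OF assms(1)] by simp
next
  case (insert x F)
  then show ?case using assms(1) unfolding bounded_linear_c0_def by simp
qed

lemma bl_scale: assumes "bounded_linear_c0 A" shows "A (c *\<^sub>R x) i = c * A x i"
  using assms unfolding bounded_linear_c0_def by blast



lemma diag_subseq:
  fixes x :: "nat \<Rightarrow> nat \<Rightarrow> real"
  assumes bdd: "\<And>k i. \<bar>x k i\<bar> \<le> M"
  shows "\<exists>r v. strict_mono r \<and> (\<forall>i. (\<lambda>k. x (r k) i) \<longlonglongrightarrow> v i)"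
proof -
  let ?P = "\<lambda>n. \<lambda>s. convergent (\<lambda>k. x (s k) n)"
  interpret nat: subseqs ?P
  proof (unfold convergent_def, unfold subseqs_def, auto)
    fix n :: nat and s :: "nat \<Rightarrow> nat" assume s: "strict_mono s"
    have "\<And>k. x (s k) n \<in> {-M..M}"
      using bdd by (simp add: abs_le_iff minus_le_iff)
    then have "\<exists>l s'. strict_mono s' \<and> ((\<lambda>k. x (s k) n) \<circ> s') \<longlonglongrightarrow> l"
    proof -
      have "seq_compact {-M..M}" by (rule compact_imp_seq_compact[OF compact_Icc])
      from seq_compactE[OF this, of "\<lambda>k. x (s k) n"] show ?thesis
        using \<open>\<And>k. x (s k) n \<in> {-M..M}\<close> by blast
    qed
    thus "\<exists>s'. strict_mono (s'::nat\<Rightarrow>nat) \<and> (\<exists>l. (\<lambda>k. x (s (s' k)) n) \<longlonglongrightarrow> l)"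
      by (auto simp: comp_def)
  qed
  define d where "d = nat.diagseq"
  have subseq: "strict_mono d"
    unfolding d_def using nat.subseq_diagseq by auto
  have cnv: "?P n d" for n
  proof -
    have Pn_seqseq: "?P n (nat.seqseq (Suc n))"
      by (rule nat.seqseq_holds)
    have 1: "(\<lambda>k. x ((nat.seqseq (Suc n) \<circ> (\<lambda>k. nat.fold_reduce (Suc n) k
      (Suc n + k))) k) n) = (\<lambda>k. x (nat.seqseq (Suc n) k) n) \<circ>
      (\<lambda>k. nat.fold_reduce (Suc n) k (Suc n + k))"
      by auto
    have 2: "?P n (d \<circ> ((+) (Suc n)))"
      unfolding d_def nat.diagseq_seqseq 1
      by (intro convergent_subseq_convergent Pn_seqseq nat.subseq_diagonal_rest)
    then obtain L where 3: "(\<lambda>na. x (d (na + Suc n)) n) \<longlonglongrightarrow> L"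
      by (auto simp: add.commute dest: convergentD)
    then have "(\<lambda>k. x (d k) n) \<longlonglongrightarrow> L"
      by (rule LIMSEQ_offset)
    then show ?thesis
      by (auto simp: convergent_def)
  qed
  have "\<forall>i. (\<lambda>k. x (d k) i) \<longlonglongrightarrow> (\<lambda>i. lim (\<lambda>k. x (d k) i)) i"
  proof
    fix i show "(\<lambda>k. x (d k) i) \<longlonglongrightarrow> (\<lambda>i. lim (\<lambda>k. x (d k) i)) i"
      using cnv[of i] unfolding convergent_LIMSEQ_iff by simp
  qed
  then show ?thesis using subseq by (intro exI[of _ d] exI[of _ "\<lambda>i. lim (\<lambda>k. x (d k) i)"] conjI)
qed

lemma l1_abs_le: assumes "in_l1 u" shows "\<bar>u i\<bar> \<le> l1_norm u"
proof -
  have "sum (\<lambda>i. \<bar>u i\<bar>) {i} \<le> (\<Sum>i. \<bar>u i\<bar>)"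
    by (rule sum_le_suminf) (use assms in \<open>auto simp: in_l1_def\<close>)
  then show ?thesis by (simp add: l1_norm_def)
qed

lemma l1_norm_nonneg: assumes "in_l1 u" shows "0 \<le> l1_norm u"
  using assms unfolding in_l1_def l1_norm_def by (simp add: suminf_nonneg)

lemma l1_lim:
  assumes l1: "\<And>k. in_l1 (u k)" and bd: "\<And>k. l1_norm (u k) \<le> M"
  and pw: "\<And>i. (\<lambda>k. u k i) \<longlonglongrightarrow> v i"
  shows "in_l1 v \<and> l1_norm v \<le> M"
proof -
  have part: "(\<Sum>i<N. \<bar>v i\<bar>) \<le> M" for N
  proof -
    have "(\<lambda>k. \<Sum>i<N. \<bar>u k i\<bar>) \<longlonglongrightarrow> (\<Sum>i<N. \<bar>v i\<bar>)"
      by (intro tendsto_sum tendsto_rabs pw)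
    moreover have "(\<Sum>i<N. \<bar>u k i\<bar>) \<le> M" for k
    proof -
      have "(\<Sum>i<N. \<bar>u k i\<bar>) \<le> (\<Sum>i. \<bar>u k i\<bar>)"
        by (rule sum_le_suminf) (use l1 in \<open>auto simp: in_l1_def\<close>)
      then show ?thesis using bd[of k] by (simp add: l1_norm_def)
    qed
    ultimately show ?thesis using LIMSEQ_le_const2 by blast
  qed
  have s: "summable (\<lambda>i. \<bar>v i\<bar>)"
    by (rule summableI_nonneg_bounded[where x=M]) (use part in auto)
  moreover have "(\<Sum>i. \<bar>v i\<bar>) \<le> M"
    by (rule suminf_le_const[OF s part])
  ultimately show ?thesis by (simp add: in_l1_def l1_norm_def)
qed



lemma l1_pair_summable:
  assumes "in_l1 u" "\<And>i. \<bar>a i\<bar> \<le> B"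
  shows "summable (\<lambda>i. \<bar>u i * a i\<bar>)" "summable (\<lambda>i. u i * a i)"
proof -
  have s: "summable (\<lambda>i. \<bar>u i\<bar> * B)"
    using assms(1) by (simp add: in_l1_def summable_mult2)
  have le: "\<bar>u i * a i\<bar> \<le> \<bar>u i\<bar> * B" for i
    by (simp add: abs_mult assms(2) mult_left_mono)
  show "summable (\<lambda>i. \<bar>u i * a i\<bar>)"
    by (rule summable_comparison_test'[OF s]) (use le in simp)
  then show "summable (\<lambda>i. u i * a i)"
    by (rule summable_rabs_cancel)
qed

lemma l1_conv:
  assumes l1: "\<And>k. in_l1 (u k)" and bd: "\<And>k. l1_norm (u k) \<le> M"
  and lv: "in_l1 v" and bv: "l1_norm v \<le> M"
  and pw: "\<And>i. (\<lambda>k. u k i) \<longlonglongrightarrow> v i"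
  and a: "a \<longlonglongrightarrow> 0"
  shows "(\<lambda>k. \<Sum>i. u k i * a i) \<longlonglongrightarrow> (\<Sum>i. v i * a i)"
proof -
  obtain B where B: "\<And>i. \<bar>a i\<bar> \<le> B"
    using convergent_imp_Bseq[of a] a by (auto simp: Bseq_def convergent_def)
  define d where "d k i = u k i - v i" for k i
  have M0: "0 \<le> M" using bv lv unfolding in_l1_def l1_norm_def by (meson order_trans suminf_nonneg abs_ge_zero)
  have sd: "summable (\<lambda>i. \<bar>d k i\<bar>)" for k
  proof -
    have "summable (\<lambda>i. \<bar>u k i\<bar> + \<bar>v i\<bar>)"
      using l1[of k] lv by (simp add: in_l1_def summable_add)
    then show ?thesis
      by (rule summable_comparison_test'[where N=0]) (simp add: d_def abs_triangle_ineq4)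
  qed
  have sdM: "(\<Sum>i. \<bar>d k i\<bar>) \<le> 2 * M" for k
  proof -
    have "(\<Sum>i. \<bar>d k i\<bar>) \<le> (\<Sum>i. \<bar>u k i\<bar> + \<bar>v i\<bar>)"
      using l1[of k] lv sd[of k] by (intro suminf_le) (auto simp: d_def abs_triangle_ineq4 in_l1_def summable_add)
    also have "\<dots> = l1_norm (u k) + l1_norm v"
      using l1[of k] lv by (simp add: in_l1_def l1_norm_def suminf_add)
    finally show ?thesis using bd[of k] bv by simp
  qed
  have sda: "summable (\<lambda>i. d k i * a i)" "summable (\<lambda>i. \<bar>d k i * a i\<bar>)" for k
    using l1_pair_summable[of "d k" a B] sd[of k] B by (auto simp: in_l1_def)
  have eq: "(\<Sum>i. u k i * a i) = (\<Sum>i. d k i * a i) + (\<Sum>i. v i * a i)" for k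
  proof -
    have "(\<Sum>i. d k i * a i) = (\<Sum>i. u k i * a i) - (\<Sum>i. v i * a i)"
      unfolding d_def left_diff_distrib
      by (rule suminf_diff[symmetric]) (use l1_pair_summable l1 lv B in blast)+
    then show ?thesis by simp
  qed
  have "(\<lambda>k. \<Sum>i. d k i * a i) \<longlonglongrightarrow> 0"
  proof (rule LIMSEQ_I)
    fix e :: real assume e: "0 < e"
    define \<delta> where "\<delta> = e / (2 * (2 * M + 1))"
    have \<delta>: "0 < \<delta>" using e M0 by (simp add: \<delta>_def)
    obtain N where N: "\<And>i. i \<ge> N \<Longrightarrow> \<bar>a i\<bar> < \<delta>"
      using LIMSEQ_D[OF a \<delta>] by auto
    have "(\<lambda>k. \<Sum>i<N. d k i * a i) \<longlonglongrightarrow> (\<Sum>i<N. (v i - v i) * a i)"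
      unfolding d_def by (intro tendsto_sum tendsto_mult tendsto_const tendsto_diff pw)
    then have "(\<lambda>k. \<Sum>i<N. d k i * a i) \<longlonglongrightarrow> 0" by simp
    then obtain K where K: "\<And>k. k \<ge> K \<Longrightarrow> \<bar>\<Sum>i<N. d k i * a i\<bar> < e / 2"
      using LIMSEQ_D[of _ 0 "e/2"] e by fastforce
    show "\<exists>no. \<forall>n\<ge>no. norm ((\<Sum>i. d n i * a i) - 0) < e"
    proof (intro exI allI impI)
      fix k assume k: "K \<le> k"
      have split: "(\<Sum>i. d k i * a i) = (\<Sum>i. d k (i + N) * a (i + N)) + (\<Sum>i<N. d k i * a i)"
        by (rule suminf_split_initial_segment[OF sda(1)])
      have tail: "\<bar>\<Sum>i. d k (i + N) * a (i + N)\<bar> \<le> \<delta> * (2 * M)"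
      proof -
        have s1: "summable (\<lambda>i. \<bar>d k (i + N) * a (i + N)\<bar>)"
          using summable_ignore_initial_segment[OF sda(2)[of k]] by simp
        have s2: "summable (\<lambda>i. \<bar>d k (i + N)\<bar>)"
          using summable_ignore_initial_segment[OF sd[of k]] by simp
        have "\<bar>\<Sum>i. d k (i + N) * a (i + N)\<bar> \<le> (\<Sum>i. \<bar>d k (i + N) * a (i + N)\<bar>)"
          by (rule summable_rabs[OF s1])
        also have "\<dots> \<le> (\<Sum>i. \<delta> * \<bar>d k (i + N)\<bar>)"
        proof (rule suminf_le)
          fix i show "\<bar>d k (i + N) * a (i + N)\<bar> \<le> \<delta> * \<bar>d k (i + N)\<bar>"
            using N[of "i+N"] by (simp add: abs_mult mult.commute[of "\<bar>d k (i+N)\<bar>"] mult_right_mono)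
        qed (use s1 s2 in \<open>auto intro: summable_mult\<close>)
        also have "\<dots> = \<delta> * (\<Sum>i. \<bar>d k (i + N)\<bar>)"
          by (rule suminf_mult[OF s2])
        also have "(\<Sum>i. \<bar>d k (i + N)\<bar>) \<le> (\<Sum>i. \<bar>d k i\<bar>)"
          using suminf_minus_initial_segment[OF sd[of k], of N] by (simp add: sum_nonneg)
        then have "\<delta> * (\<Sum>i. \<bar>d k (i + N)\<bar>) \<le> \<delta> * (2 * M)"
          using sdM[of k] \<delta> by (meson mult_left_mono less_imp_le order_trans)
        finally show ?thesis .
      qed
      have "\<delta> * (2 * M) < e / 2"
      proof -
        have "\<delta> * (2 * M) = (e / 2) * ((2 * M) / (2 * M + 1))"
          unfolding \<delta>_def using M0 by (simp add: field_simps)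
        also have "\<dots> < e / 2" using e M0 by (simp add: field_simps)
        finally show ?thesis .
      qed
      then show "norm ((\<Sum>i. d k i * a i) - 0) < e"
        using split tail K[OF k] by simp
    qed
  qed
  then have "(\<lambda>k. (\<Sum>i. d k i * a i) + (\<Sum>i. v i * a i)) \<longlonglongrightarrow> 0 + (\<Sum>i. v i * a i)"
    by (intro tendsto_add tendsto_const)
  then show ?thesis using eq by simp
qed


theorem proposition1:
  fixes A :: "'a::{real_inner, complete_space} \<Rightarrow> (nat \<Rightarrow> real)"
    and Hn :: "'a set" and n :: nat and f :: 'a
  assumes "bounded_linear_c0 A"
    and "subspace Hn"
    and "\<exists>B. finite B \<and> independent B \<and> span B = Hn \<and> card B = n"
    and "\<forall>z\<in>Hn. (\<forall>i. A z i = 0) \<longrightarrow> z = 0"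
  shows "argmin_l1 A Hn f \<noteq> {}"
proof -
  note bl = assms(1)
  obtain B where B: "finite B" "span B = Hn" using assms(3) by blast
  obtain C where C: "finite C" "span C = span B" "pairwise orthogonal C"
    using basis_orthogonal[OF B(1)] by blast
  have spanC: "span C = Hn" using C(2) B(2) by simp
  define w where "w i = (\<Sum>c\<in>C. (A c i / (c \<bullet> c)) *\<^sub>R c)" for i
  have wHn: "w i \<in> Hn" for i
  proof -
    have "w i \<in> span C" unfolding w_def by (simp add: span_base span_mul span_sum)
    then show ?thesis using spanC by simp
  qed
  have riesz: "A z i = z \<bullet> w i" if z: "z \<in> Hn" for z i
  proof -
    have zC: "z \<in> span C" using z spanC by simp
    have eq: "z = (\<Sum>b\<in>C. (b \<bullet> z / (b \<bullet> b)) *\<^sub>R b)"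
      by (rule GS_expand[OF C(1) C(3) zC])
    have "A z i = A (\<Sum>b\<in>C. (b \<bullet> z / (b \<bullet> b)) *\<^sub>R b) i"
      using eq by (rule arg_cong[where f="\<lambda>y. A y i"])
    also have "\<dots> = (\<Sum>b\<in>C. (b \<bullet> z / (b \<bullet> b)) * A b i)"
      by (simp add: bl_sum[OF bl C(1)] bl_scale[OF bl])
    also have "\<dots> = z \<bullet> w i"
      unfolding w_def inner_sum_right inner_scaleR_right
      by (rule sum.cong) (simp_all add: inner_commute)
    finally show ?thesis .
  qed
  obtain g where g: "g \<in> span B" "\<And>y. y \<in> span B \<Longrightarrow> orthogonal (f - g) y"
    using proj_exists[OF B(1), of f] by blast
  have gHn: "g \<in> Hn" using g(1) B(2) by simp
  have zg: "z \<bullet> g = z \<bullet> f" if "z \<in> Hn" for z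
  proof -
    have "orthogonal (f - g) z" using g(2) that B(2) by simp
    then have "f \<bullet> z - g \<bullet> z = 0" by (simp add: orthogonal_def inner_diff_left)
    then show ?thesis by (simp add: inner_commute[of z])
  qed
  obtain Bw where Bw: "Bw \<subseteq> range w" "independent Bw" "range w \<subseteq> span Bw"
    by (rule basis_exists[of "range w"])
  have BwHn: "Bw \<subseteq> Hn"
  proof
    fix x assume "x \<in> Bw" then obtain i where "x = w i" using Bw(1) by blast
    then show "x \<in> Hn" using wHn by simp
  qed
  have "Bw \<subseteq> span B" using BwHn B(2) by simp
  then have finBw: "finite Bw"
    using independent_span_bound[OF B(1) Bw(2)] by blast
  obtain p where p: "p \<in> span Bw" "\<And>y. y \<in> span Bw \<Longrightarrow> orthogonal (g - p) y"
    using proj_exists[OF finBw, of g] by blast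
  have spBw: "span Bw \<subseteq> Hn" using BwHn assms(2) by (simp add: span_minimal)
  have pHn: "p \<in> Hn" using p(1) spBw by blast
  have yHn: "g - p \<in> Hn" using gHn pHn assms(2) by (simp add: subspace_diff)
  have "A (g - p) i = 0" for i
  proof -
    have "w i \<in> span Bw" using Bw(3) by blast
    then have "orthogonal (g - p) (w i)" by (rule p(2))
    then show ?thesis using riesz[OF yHn, of i] by (simp add: orthogonal_def)
  qed
  then have "g - p = 0" using assms(4) yHn by blast
  then have "g \<in> span Bw" using p(1) by simp
  then obtain c where gc: "g = (\<Sum>v\<in>Bw. c v *\<^sub>R v)"
    using span_finite[OF finBw] by auto
  define h where "h v = (SOME i. w i = v)" for v
  have wh: "w (h v) = v" if "v \<in> Bw" for v
  proof -
    have "\<exists>i. w i = v" using that Bw(1) by blast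
    then show ?thesis unfolding h_def by (rule someI_ex)
  qed
  have injh: "inj_on h Bw"
  proof (rule inj_onI)
    fix x y assume "x \<in> Bw" "y \<in> Bw" "h x = h y"
    then have "w (h x) = w (h y)" by simp
    then show "x = y" using wh[OF \<open>x \<in> Bw\<close>] wh[OF \<open>y \<in> Bw\<close>] by simp
  qed
  define J where "J = h ` Bw"
  have finJ: "finite J" using finBw by (simp add: J_def)
  define u0 where "u0 i = (if i \<in> J then c (w i) else 0)" for i
  have u0F: "u0 \<in> feasible A Hn f"
  proof -
    have "in_l1 u0" unfolding in_l1_def by (rule summable_finite[OF finJ]) (simp add: u0_def)
    moreover have "adj_pair A u0 z = z \<bullet> f" if z: "z \<in> Hn" for z
    proof -
      have "adj_pair A u0 z = (\<Sum>i\<in>J. u0 i * A z i)"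
        unfolding adj_pair_def by (rule suminf_finite[OF finJ]) (simp add: u0_def)
      also have "\<dots> = (\<Sum>i\<in>J. c (w i) * (z \<bullet> w i))"
        by (rule sum.cong) (simp_all add: u0_def riesz[OF z])
      also have "\<dots> = (\<Sum>v\<in>Bw. c (w (h v)) * (z \<bullet> w (h v)))"
        unfolding J_def by (rule sum.reindex[OF injh, unfolded comp_def])
      also have "\<dots> = (\<Sum>v\<in>Bw. c v * (z \<bullet> v))"
        by (rule sum.cong) (simp_all add: wh)
      also have "\<dots> = z \<bullet> g" unfolding gc by (simp add: inner_sum_right)
      also have "\<dots> = z \<bullet> f" by (rule zg[OF z])
      finally show ?thesis .
    qed
    ultimately show ?thesis unfolding feasible_def by blast
  qed
  define F where "F = feasible A Hn f"
  have Fne: "l1_norm ` F \<noteq> {}" using u0F F_def by blast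
  have Fl1: "in_l1 u" if "u \<in> F" for u using that by (simp add: F_def feasible_def)
  have bddF: "bdd_below (l1_norm ` F)"
    by (rule bdd_belowI[of _ 0]) (use Fl1 l1_norm_nonneg in blast)
  define m where "m = Inf (l1_norm ` F)"
  have ex: "\<exists>u. u \<in> F \<and> l1_norm u < m + inverse (real (Suc k))" for k
  proof -
    have "Inf (l1_norm ` F) < m + inverse (real (Suc k))" by (simp add: m_def)
    from cInf_lessD[OF Fne this] show ?thesis by blast
  qed
  have ex': "\<forall>k. \<exists>u. u \<in> F \<and> l1_norm u < m + inverse (real (Suc k))"
    using ex by blast
  from choice[OF ex'] obtain U where
    U': "\<forall>k. U k \<in> F \<and> l1_norm (U k) < m + inverse (real (Suc k))" by blast
  have U: "\<And>k. U k \<in> F" "\<And>k. l1_norm (U k) < m + inverse (real (Suc k))"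
    using U' by auto
  have mle: "m \<le> l1_norm u" if "u \<in> F" for u
    unfolding m_def using bddF that by (simp add: cInf_lower)
  have Ul1: "in_l1 (U k)" for k using Fl1 U(1) by blast
  have Ub: "l1_norm (U k) \<le> m + 1" for k
  proof -
    have "inverse (real (Suc k)) \<le> 1" by (simp add: inverse_le_1_iff)
    then show ?thesis using U(2)[of k] by linarith
  qed
  have "\<bar>U k i\<bar> \<le> m + 1" for k i using l1_abs_le[OF Ul1] Ub order_trans by blast
  then obtain r v where r: "strict_mono r" and rv: "\<And>i. (\<lambda>k. U (r k) i) \<longlonglongrightarrow> v i"
    using diag_subseq[of U "m+1"] by blast
  have lv: "in_l1 v" and lvb: "l1_norm v \<le> m + 1"
    using l1_lim[of "\<lambda>k. U (r k)" "m+1" v] Ul1 Ub rv by auto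
  have vle: "l1_norm v \<le> m + inverse (real (Suc j))" for j
  proof -
    have "l1_norm (U (r (k + j))) \<le> m + inverse (real (Suc j))" for k
    proof -
      have "j \<le> r (k + j)" using seq_suble[OF r, of "k+j"] by simp
      then have "inverse (real (Suc (r (k + j)))) \<le> inverse (real (Suc j))"
        by (simp add: le_imp_inverse_le)
      then show ?thesis using U(2)[of "r (k + j)"] by linarith
    qed
    moreover have "(\<lambda>k. U (r (k + j)) i) \<longlonglongrightarrow> v i" for i
      using LIMSEQ_ignore_initial_segment[OF rv[of i], of j] by simp
    ultimately show ?thesis
      using l1_lim[of "\<lambda>k. U (r (k + j))" "m + inverse (real (Suc j))" v] Ul1 by blast
  qed
  have vm: "l1_norm v \<le> m"
  proof -
    have "(\<lambda>j. m + inverse (real (Suc j))) \<longlonglongrightarrow> m + 0"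
      by (intro tendsto_add tendsto_const LIMSEQ_inverse_real_of_nat)
    then have "(\<lambda>j. m + inverse (real (Suc j))) \<longlonglongrightarrow> m" by simp
    then show ?thesis by (rule LIMSEQ_le_const) (use vle in auto)
  qed
  have vF: "v \<in> F"
  proof -
    have "adj_pair A v z = z \<bullet> f" if z: "z \<in> Hn" for z
    proof -
      have a0: "A z \<longlonglongrightarrow> 0" using bl unfolding bounded_linear_c0_def by blast
      have lim: "(\<lambda>k. \<Sum>i. U (r k) i * A z i) \<longlonglongrightarrow> (\<Sum>i. v i * A z i)"
        by (rule l1_conv[OF Ul1 Ub lv lvb rv a0])
      have "(\<Sum>i. U (r k) i * A z i) = z \<bullet> f" for k
        using U(1)[of "r k"] z by (simp add: F_def feasible_def adj_pair_def)
      then have "(\<lambda>k. \<Sum>i. U (r k) i * A z i) \<longlonglongrightarrow> z \<bullet> f" by simp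
      then show ?thesis using lim LIMSEQ_unique unfolding adj_pair_def by blast
    qed
    then show ?thesis using lv by (simp add: F_def feasible_def)
  qed
  have "\<forall>u \<in> feasible A Hn f. l1_norm v \<le> l1_norm u"
    using vm mle unfolding F_def by (meson order_trans)
  then have "v \<in> argmin_l1 A Hn f"
    unfolding argmin_l1_def using vF F_def by simp
  then show ?thesis by blast
qed

end
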